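(* Let $X$ be compact and $\alpha$ a standard cocycle representing $a$. Then $\|\widehat g\|_\alpha=\sup_{x\in X}|\rho_{x,\alpha}(\widehat g)|$ is finite for every $\widehat g\in\widehat G_a$, and $\|\cdot\|_\alpha$ is a seminorm on $\widehat G_a$: $\|\widehat g^{-1}\|_\alpha=\|\widehat g\|_\alpha$ and $\|\widehat g\widehat h\|_\alpha\le\|\widehat g\|_\alpha+\|\widehat h\|_\alpha$ for all $\widehat g,\widehat h\in\widehat G_a$.
   Context: $A$ is $\mathbb{Z}$ or the discrete group $\mathbb{R}$. $X$ is a path-connected space, $a\in\mathrm{H}^1(X;A)$, $\pi\colon\widehat X_a\to X$ a principal $A$-bundle with holonomy $a$, $T_r$ the action of $r\in A$. $\widehat G_a$ is the group of homeomorphisms $\widehat g$ of $\widehat X_a$ with $\pi\circ\widehat g=g\circ\pi$ for a homeomorphism $g$ of $X$. A real singular $1$-cocycle $\alpha$ representing $a$ is standard if there is a continuous $\theta\colon\widehat X_a\to\mathbb{R}$ with $d\theta=\pi^*\alpha$ and $\theta(T_r\widehat y)=\theta(\widehat y)+r$ for all $\widehat y,r$. Then $\rho_{x,\alpha}(\widehat g)=\theta(\widehat g(\widehat x))-\theta(\widehat x)$ for any $\widehat x\in\pi^{-1}(x)$. *)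

theory Defs
  imports "HOL-Analysis.Analysis" "HOL-Homology.Homology"
begin

definition vtx :: "nat \<Rightarrow> (nat \<Rightarrow> real)" where
  "vtx k = (\<lambda>i. if i = k then 1 else 0)"

text \<open>A path viewed as a singular 1-simplex (vertex 0 goes to gamma 0, vertex 1 to gamma 1).\<close>
definition path_simplex :: "(real \<Rightarrow> 'a) \<Rightarrow> (nat \<Rightarrow> real) \<Rightarrow> 'a" where
  "path_simplex \<gamma> = restrict (\<lambda>t. \<gamma> (t 1)) (standard_simplex 1)"

definition real_1_cocycle :: "'a topology \<Rightarrow> (((nat \<Rightarrow> real) \<Rightarrow> 'a) \<Rightarrow> real) \<Rightarrow> bool" where
  "real_1_cocycle X \<alpha> \<longleftrightarrow>
     (\<forall>\<tau>. singular_simplex 2 X \<tau> \<longrightarrow>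
        \<alpha> (singular_face 2 0 \<tau>) - \<alpha> (singular_face 2 1 \<tau>) + \<alpha> (singular_face 2 2 \<tau>) = 0)"

definition principal_bundle ::
  "real set \<Rightarrow> 'x topology \<Rightarrow> 'y topology \<Rightarrow> ('y \<Rightarrow> 'x) \<Rightarrow> (real \<Rightarrow> 'y \<Rightarrow> 'y) \<Rightarrow> bool" where
  "principal_bundle A X Y \<pi> T \<longleftrightarrow>
     continuous_map Y X \<pi> \<and> \<pi> ` topspace Y = topspace X \<and>
     (\<forall>r\<in>A. homeomorphic_map Y Y (T r)) \<and>
     (\<forall>y\<in>topspace Y. T 0 y = y) \<and>
     (\<forall>r\<in>A. \<forall>s\<in>A. \<forall>y\<in>topspace Y. T (r + s) y = T r (T s y)) \<and>
     (\<forall>r\<in>A. \<forall>y\<in>topspace Y. \<pi> (T r y) = \<pi> y) \<and>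
     (\<forall>x\<in>topspace X. \<exists>U s. openin X U \<and> x \<in> U \<and>
        (\<forall>u\<in>U. s u \<in> topspace Y \<and> \<pi> (s u) = u) \<and>
        homeomorphic_map (prod_topology (subtopology X U) (discrete_topology A))
                         (subtopology Y {y \<in> topspace Y. \<pi> y \<in> U})
                         (\<lambda>(u, r). T r (s u)))"

text \<open>The bundle has holonomy a: a assigns to each loop gamma in X an element of A such that
  every lift of gamma ends at T (a gamma) applied to its starting point.
  (For path-connected X, H^1(X;A) = Hom(H_1 X, A), so a class is determined by its values on loops.)\<close>
definition has_holonomy ::
  "real set \<Rightarrow> 'x topology \<Rightarrow> 'y topology \<Rightarrow> ('y \<Rightarrow> 'x) \<Rightarrow> (real \<Rightarrow> 'y \<Rightarrow> 'y)
     \<Rightarrow> ((real \<Rightarrow> 'x) \<Rightarrow> real) \<Rightarrow> bool" where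
  "has_holonomy A X Y \<pi> T a \<longleftrightarrow>
     (\<forall>\<gamma>. pathin X \<gamma> \<and> \<gamma> 0 = \<gamma> 1 \<longrightarrow>
        a \<gamma> \<in> A \<and>
        (\<forall>\<gamma>'. pathin Y \<gamma>' \<and> (\<forall>t\<in>{0..1}. \<pi> (\<gamma>' t) = \<gamma> t) \<longrightarrow> \<gamma>' 1 = T (a \<gamma>) (\<gamma>' 0)))"

definition represents :: "'x topology \<Rightarrow> (((nat \<Rightarrow> real) \<Rightarrow> 'x) \<Rightarrow> real) \<Rightarrow> ((real \<Rightarrow> 'x) \<Rightarrow> real) \<Rightarrow> bool" where
  "represents X \<alpha> a \<longleftrightarrow> real_1_cocycle X \<alpha> \<and>
     (\<forall>\<gamma>. pathin X \<gamma> \<and> \<gamma> 0 = \<gamma> 1 \<longrightarrow> \<alpha> (path_simplex \<gamma>) = a \<gamma>)"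

text \<open>theta witnesses that alpha is standard: d theta = pi^* alpha, theta(T_r y) = theta y + r.\<close>
definition standard_witness ::
  "real set \<Rightarrow> 'x topology \<Rightarrow> 'y topology \<Rightarrow> ('y \<Rightarrow> 'x) \<Rightarrow> (real \<Rightarrow> 'y \<Rightarrow> 'y)
     \<Rightarrow> (((nat \<Rightarrow> real) \<Rightarrow> 'x) \<Rightarrow> real) \<Rightarrow> ('y \<Rightarrow> real) \<Rightarrow> bool" where
  "standard_witness A X Y \<pi> T \<alpha> \<theta> \<longleftrightarrow>
     continuous_map Y euclideanreal \<theta> \<and>
     (\<forall>\<sigma>. singular_simplex 1 Y \<sigma> \<longrightarrow>
        \<alpha> (simplex_map 1 \<pi> \<sigma>) = \<theta> (\<sigma> (vtx 1)) - \<theta> (\<sigma> (vtx 0))) \<and>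
     (\<forall>r\<in>A. \<forall>y\<in>topspace Y. \<theta> (T r y) = \<theta> y + r)"

definition standard_cocycle ::
  "real set \<Rightarrow> 'x topology \<Rightarrow> 'y topology \<Rightarrow> ('y \<Rightarrow> 'x) \<Rightarrow> (real \<Rightarrow> 'y \<Rightarrow> 'y)
     \<Rightarrow> ((real \<Rightarrow> 'x) \<Rightarrow> real) \<Rightarrow> (((nat \<Rightarrow> real) \<Rightarrow> 'x) \<Rightarrow> real) \<Rightarrow> bool" where
  "standard_cocycle A X Y \<pi> T a \<alpha> \<longleftrightarrow>
     represents X \<alpha> a \<and> (\<exists>\<theta>. standard_witness A X Y \<pi> T \<alpha> \<theta>)"

text \<open>The group hat G_a: homeomorphisms of Y covering a homeomorphism of X
  and commuting with the A-action (automorphisms of the principal bundle).\<close>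
definition lift_group ::
  "real set \<Rightarrow> 'x topology \<Rightarrow> 'y topology \<Rightarrow> ('y \<Rightarrow> 'x) \<Rightarrow> (real \<Rightarrow> 'y \<Rightarrow> 'y) \<Rightarrow> ('y \<Rightarrow> 'y) set" where
  "lift_group A X Y \<pi> T =
     {gh. homeomorphic_map Y Y gh \<and>
          (\<exists>g. homeomorphic_map X X g \<and> (\<forall>y\<in>topspace Y. \<pi> (gh y) = g (\<pi> y))) \<and>
          (\<forall>r\<in>A. \<forall>y\<in>topspace Y. gh (T r y) = T r (gh y))}"

definition rot :: "'y topology \<Rightarrow> ('y \<Rightarrow> 'x) \<Rightarrow> ('y \<Rightarrow> real) \<Rightarrow> 'x \<Rightarrow> ('y \<Rightarrow> 'y) \<Rightarrow> real" where
  "rot Y \<pi> \<theta> x gh = (let xh = (SOME y. y \<in> topspace Y \<and> \<pi> y = x) in \<theta> (gh xh) - \<theta> xh)"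

definition lift_norm :: "'x topology \<Rightarrow> 'y topology \<Rightarrow> ('y \<Rightarrow> 'x) \<Rightarrow> ('y \<Rightarrow> real) \<Rightarrow> ('y \<Rightarrow> 'y) \<Rightarrow> real" where
  "lift_norm X Y \<pi> \<theta> gh = (SUP x\<in>topspace X. \<bar>rot Y \<pi> \<theta> x gh\<bar>)"

end

theory Submission imports Defs begin


lemma pb_cont:
  assumes "principal_bundle A X Y \<pi> T"
  shows "continuous_map Y X \<pi>"
  using assms unfolding principal_bundle_def by (elim conjE) assumption

lemma pb_img:
  assumes "principal_bundle A X Y \<pi> T"
  shows "\<pi> ` topspace Y = topspace X"
  using assms unfolding principal_bundle_def by (elim conjE) assumption

lemma pb_homeo:
  assumes "principal_bundle A X Y \<pi> T"
  shows "\<forall>r\<in>A. homeomorphic_map Y Y (T r)"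
  using assms unfolding principal_bundle_def by (elim conjE) assumption

lemma pb_T0:
  assumes "principal_bundle A X Y \<pi> T"
  shows "\<forall>y\<in>topspace Y. T 0 y = y"
  using assms unfolding principal_bundle_def by (elim conjE) assumption

lemma pb_add:
  assumes "principal_bundle A X Y \<pi> T"
  shows "\<forall>r\<in>A. \<forall>s\<in>A. \<forall>y\<in>topspace Y. T (r + s) y = T r (T s y)"
  using assms unfolding principal_bundle_def by (elim conjE) assumption

lemma pb_piT:
  assumes "principal_bundle A X Y \<pi> T"
  shows "\<forall>r\<in>A. \<forall>y\<in>topspace Y. \<pi> (T r y) = \<pi> y"
  using assms unfolding principal_bundle_def by (elim conjE) assumption

lemma pb_loc:
  assumes "principal_bundle A X Y \<pi> T"
  shows "\<forall>x\<in>topspace X. \<exists>U s. openin X U \<and> x \<in> U \<and>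
        (\<forall>u\<in>U. s u \<in> topspace Y \<and> \<pi> (s u) = u) \<and>
        homeomorphic_map (prod_topology (subtopology X U) (discrete_topology A))
                         (subtopology Y {y \<in> topspace Y. \<pi> y \<in> U})
                         (\<lambda>(u, r). T r (s u))"
  using assms unfolding principal_bundle_def by (elim conjE) assumption

lemma sw_cont:
  assumes "standard_witness A X Y \<pi> T \<alpha> \<theta>"
  shows "continuous_map Y euclideanreal \<theta>"
  using assms unfolding standard_witness_def by (elim conjE) assumption

lemma sw_T:
  assumes "standard_witness A X Y \<pi> T \<alpha> \<theta>"
  shows "\<forall>r\<in>A. \<forall>y\<in>topspace Y. \<theta> (T r y) = \<theta> y + r"
  using assms unfolding standard_witness_def by (elim conjE) assumption

lemma fiber_orbit:
  assumes A: "A = \<int> \<or> A = UNIV" and pb: "principal_bundle A X Y \<pi> T"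
    and y1: "y1 \<in> topspace Y" and y2: "y2 \<in> topspace Y" and eq: "\<pi> y1 = \<pi> y2"
  shows "\<exists>r\<in>A. y2 = T r y1"
proof -
  have x: "\<pi> y1 \<in> topspace X" using pb_img[OF pb] y1 by blast
  then obtain U s where U: "openin X U" "\<pi> y1 \<in> U" and s: "\<forall>u\<in>U. s u \<in> topspace Y \<and> \<pi> (s u) = u"
    and h: "homeomorphic_map (prod_topology (subtopology X U) (discrete_topology A))
                         (subtopology Y {y \<in> topspace Y. \<pi> y \<in> U})
                         (\<lambda>(u, r). T r (s u))"
    using pb_loc[OF pb] x by blast
  have img: "(\<lambda>(u, r). T r (s u)) ` ((topspace X \<inter> U) \<times> A) = topspace Y \<inter> {y \<in> topspace Y. \<pi> y \<in> U}"
    using h unfolding homeomorphic_eq_everything_map by simp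
  have piT: "\<forall>r\<in>A. \<forall>y\<in>topspace Y. \<pi> (T r y) = \<pi> y" using pb_piT[OF pb] by blast
  have add: "\<forall>r\<in>A. \<forall>s\<in>A. \<forall>y\<in>topspace Y. T (r + s) y = T r (T s y)" using pb_add[OF pb] by blast
  have "y1 \<in> topspace Y \<inter> {y \<in> topspace Y. \<pi> y \<in> U}" using y1 U by simp
  then have "y1 \<in> (\<lambda>(u, r). T r (s u)) ` ((topspace X \<inter> U) \<times> A)" using img by simp
  then obtain u1 r1 where 1: "u1 \<in> U" "r1 \<in> A" "y1 = T r1 (s u1)" by auto
  have "y2 \<in> topspace Y \<inter> {y \<in> topspace Y. \<pi> y \<in> U}" using y2 U eq by simp
  then have "y2 \<in> (\<lambda>(u, r). T r (s u)) ` ((topspace X \<inter> U) \<times> A)" using img by simp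
  then obtain u2 r2 where 2: "u2 \<in> U" "r2 \<in> A" "y2 = T r2 (s u2)" by auto
  have "\<pi> y1 = u1" using 1 piT s by simp
  moreover have "\<pi> y2 = u2" using 2 piT s by simp
  ultimately have "u1 = u2" using eq by simp
  have d: "r2 - r1 \<in> A" using A 1 2 by (auto simp: Ints_diff)
  have "T (r2 - r1 + r1) (s u1) = T (r2 - r1) (T r1 (s u1))" using add 1 d s by blast
  then have "T (r2 - r1) y1 = T (r2 - r1 + r1) (s u1)" using 1 by simp
  also have "\<dots> = y2" using 2 \<open>u1 = u2\<close> by simp
  finally show ?thesis using d by metis
qed

lemma rot_eq:
  assumes A: "A = \<int> \<or> A = UNIV" and pb: "principal_bundle A X Y \<pi> T"
    and sw: "standard_witness A X Y \<pi> T \<alpha> \<theta>"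
    and k: "k ` topspace Y \<subseteq> topspace Y" and kc: "\<forall>r\<in>A. \<forall>y\<in>topspace Y. k (T r y) = T r (k y)"
    and y: "y \<in> topspace Y"
  shows "rot Y \<pi> \<theta> (\<pi> y) k = \<theta> (k y) - \<theta> y"
proof -
  define y0 where "y0 = (SOME z. z \<in> topspace Y \<and> \<pi> z = \<pi> y)"
  have "y0 \<in> topspace Y \<and> \<pi> y0 = \<pi> y" unfolding y0_def by (rule someI[of _ y]) (use y in simp)
  then obtain r where r: "r \<in> A" "y = T r y0" using fiber_orbit[OF A pb] y by metis
  have th: "\<forall>r\<in>A. \<forall>y\<in>topspace Y. \<theta> (T r y) = \<theta> y + r" using sw_T[OF sw] .
  have "\<theta> (k y) - \<theta> y = \<theta> (T r (k y0)) - \<theta> (T r y0)" using r kc \<open>y0 \<in> topspace Y \<and> _\<close> by simp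
  also have "\<dots> = \<theta> (k y0) - \<theta> y0" using th r k \<open>y0 \<in> topspace Y \<and> _\<close> by auto
  finally show ?thesis unfolding rot_def Let_def y0_def by simp
qed



lemma lg_homeo:
  assumes "gh \<in> lift_group A X Y \<pi> T"
  shows "homeomorphic_map Y Y gh"
  using assms unfolding lift_group_def mem_Collect_eq by (elim conjE) assumption

lemma lg_comm:
  assumes "gh \<in> lift_group A X Y \<pi> T"
  shows "\<forall>r\<in>A. \<forall>y\<in>topspace Y. gh (T r y) = T r (gh y)"
  using assms unfolding lift_group_def mem_Collect_eq by (elim conjE) assumption

lemma rot_cont:
  assumes A: "A = \<int> \<or> A = UNIV" and pb: "principal_bundle A X Y \<pi> T"
    and sw: "standard_witness A X Y \<pi> T \<alpha> \<theta>"
    and gh: "gh \<in> lift_group A X Y \<pi> T"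
  shows "continuous_map X euclideanreal (\<lambda>x. rot Y \<pi> \<theta> x gh)"
proof -
  have ghc: "continuous_map Y Y gh" and ghT: "\<forall>r\<in>A. \<forall>y\<in>topspace Y. gh (T r y) = T r (gh y)"
    using lg_homeo[OF gh] lg_comm[OF gh] by (auto simp: homeomorphic_imp_continuous_map)
  have ghi: "gh ` topspace Y \<subseteq> topspace Y" using ghc by (simp add: continuous_map_image_subset_topspace)
  have thc: "continuous_map Y euclideanreal \<theta>" using sw_cont[OF sw] .
  have T0: "\<forall>y\<in>topspace Y. T 0 y = y" using pb_T0[OF pb] .
  have zA: "0 \<in> A" using A by auto
  have loc: "\<exists>W. openin X W \<and> x \<in> W \<and> W \<subseteq> {x \<in> topspace X. rot Y \<pi> \<theta> x gh \<in> V}"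
    if x: "x \<in> topspace X" and V: "open V" and xV: "rot Y \<pi> \<theta> x gh \<in> V" for x V
  proof -
    obtain U s where U: "openin X U" "x \<in> U" and s: "\<forall>u\<in>U. s u \<in> topspace Y \<and> \<pi> (s u) = u"
      and h: "homeomorphic_map (prod_topology (subtopology X U) (discrete_topology A))
                         (subtopology Y {y \<in> topspace Y. \<pi> y \<in> U})
                         (\<lambda>(u, r). T r (s u))"
      using pb_loc[OF pb] x by blast
    have "continuous_map (subtopology X U) (prod_topology (subtopology X U) (discrete_topology A)) (\<lambda>u. (u, 0))"
    proof (rule continuous_map_pairedI)
      show "continuous_map (subtopology X U) (subtopology X U) (\<lambda>u. u)"
        using continuous_map_id[unfolded id_def] .
      show "continuous_map (subtopology X U) (discrete_topology A) (\<lambda>u. 0)"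
        using zA by simp
    qed
    then have "continuous_map (subtopology X U) (subtopology Y {y \<in> topspace Y. \<pi> y \<in> U}) ((\<lambda>(u, r). T r (s u)) \<circ> (\<lambda>u. (u, 0)))"
      by (rule continuous_map_compose[OF _ homeomorphic_imp_continuous_map[OF h]])
    then have c1: "continuous_map (subtopology X U) (subtopology Y {y \<in> topspace Y. \<pi> y \<in> U}) (\<lambda>u. T 0 (s u))"
      by (simp add: o_def)
    have "continuous_map (subtopology X U) Y (\<lambda>u. T 0 (s u))"
      using continuous_map_in_subtopology[THEN iffD1, OF c1] by (rule conjunct1)
    then have sc: "continuous_map (subtopology X U) Y s"
      by (rule continuous_map_eq) (use s T0 in auto)
    define g where "g u = \<theta> (gh (s u)) - \<theta> (s u)" for u
    have gc: "continuous_map (subtopology X U) euclideanreal g"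
      unfolding g_def by (intro continuous_map_diff continuous_map_compose[OF continuous_map_compose[OF sc ghc] thc, unfolded o_def] continuous_map_compose[OF sc thc, unfolded o_def])
    have fg: "rot Y \<pi> \<theta> u gh = g u" if "u \<in> U" for u
      using rot_eq[OF A pb sw ghi ghT, of "s u"] s that unfolding g_def by simp
    define W where "W = {u \<in> topspace (subtopology X U). g u \<in> V}"
    have "openin (subtopology X U) W" unfolding W_def
      by (rule openin_continuous_map_preimage[OF gc]) (use V in simp)
    then have "openin X W" using openin_open_subtopology[OF U(1)] by blast
    moreover have "x \<in> W" using x U xV fg unfolding W_def by simp
    moreover have "W \<subseteq> {x \<in> topspace X. rot Y \<pi> \<theta> x gh \<in> V}" using fg unfolding W_def by auto
    ultimately show ?thesis by blast
  qed
  show ?thesis unfolding continuous_map_def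
  proof (intro conjI allI impI)
    fix V :: "real set" assume "openin euclideanreal V"
    then have "open V" by simp
    then show "openin X {x \<in> topspace X. rot Y \<pi> \<theta> x gh \<in> V}"
    proof (subst openin_subopen, intro ballI)
      fix x assume "x \<in> {x \<in> topspace X. rot Y \<pi> \<theta> x gh \<in> V}"
      then show "\<exists>T. openin X T \<and> x \<in> T \<and> T \<subseteq> {x \<in> topspace X. rot Y \<pi> \<theta> x gh \<in> V}"
        using loc[OF _ \<open>open V\<close>] by simp
    qed
  qed auto
qed


lemma rot_bdd:
  assumes A: "A = \<int> \<or> A = UNIV" and pb: "principal_bundle A X Y \<pi> T"
    and sw: "standard_witness A X Y \<pi> T \<alpha> \<theta>" and cX: "compact_space X"
    and gh: "gh \<in> lift_group A X Y \<pi> T"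
  shows "bdd_above ((\<lambda>x. \<bar>rot Y \<pi> \<theta> x gh\<bar>) ` topspace X)"
proof -
  have "compactin euclideanreal ((\<lambda>x. rot Y \<pi> \<theta> x gh) ` topspace X)"
    using image_compactin[OF cX[unfolded compact_space_def] rot_cont[OF A pb sw gh]] .
  then have "bounded ((\<lambda>x. rot Y \<pi> \<theta> x gh) ` topspace X)" by (simp add: compact_imp_bounded)
  then obtain B where "\<forall>z\<in>(\<lambda>x. rot Y \<pi> \<theta> x gh) ` topspace X. \<bar>z\<bar> \<le> B"
    unfolding bounded_real by blast
  then show ?thesis unfolding bdd_above_def by auto
qed

theorem lemma4p1:
  fixes A :: "real set" and X :: "'x topology" and Y :: "'y topology"
    and \<pi> :: "'y \<Rightarrow> 'x" and T :: "real \<Rightarrow> 'y \<Rightarrow> 'y"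
    and a :: "(real \<Rightarrow> 'x) \<Rightarrow> real" and \<alpha> :: "((nat \<Rightarrow> real) \<Rightarrow> 'x) \<Rightarrow> real"
    and \<theta> :: "'y \<Rightarrow> real"
  assumes "A = \<int> \<or> A = UNIV"
    and "path_connected_space X" and "topspace X \<noteq> {}"
    and "compact_space X"
    and "principal_bundle A X Y \<pi> T"
    and "has_holonomy A X Y \<pi> T a"
    and "standard_cocycle A X Y \<pi> T a \<alpha>"
    and "standard_witness A X Y \<pi> T \<alpha> \<theta>"
  shows "(\<forall>gh\<in>lift_group A X Y \<pi> T. bdd_above ((\<lambda>x. \<bar>rot Y \<pi> \<theta> x gh\<bar>) ` topspace X)) \<and>
         (\<forall>gh\<in>lift_group A X Y \<pi> T.
           lift_norm X Y \<pi> \<theta> (restrict (inv_into (topspace Y) gh) (topspace Y)) = lift_norm X Y \<pi> \<theta> gh) \<and>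
         (\<forall>gh\<in>lift_group A X Y \<pi> T. \<forall>hh\<in>lift_group A X Y \<pi> T.
           lift_norm X Y \<pi> \<theta> (gh \<circ> hh) \<le> lift_norm X Y \<pi> \<theta> gh + lift_norm X Y \<pi> \<theta> hh)"
proof -
  note A = assms(1) and pb = assms(5) and sw = assms(8) and cX = assms(4) and ne = assms(3)
  let ?L = "lift_group A X Y \<pi> T"
  have piX: "\<pi> y \<in> topspace X" if "y \<in> topspace Y" for y
    using pb_cont[OF pb] that by (simp add: continuous_map_def Pi_iff)
  have fib: "\<exists>y\<in>topspace Y. \<pi> y = x" if "x \<in> topspace X" for x
    using pb_img[OF pb] that by (metis imageE)
  have P1: "\<forall>gh\<in>?L. bdd_above ((\<lambda>x. \<bar>rot Y \<pi> \<theta> x gh\<bar>) ` topspace X)"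
    by (intro ballI rot_bdd[OF A pb sw cX])
  have P2: "lift_norm X Y \<pi> \<theta> (restrict (inv_into (topspace Y) gh) (topspace Y)) = lift_norm X Y \<pi> \<theta> gh"
    if gh: "gh \<in> ?L" for gh
  proof -
    define g' where "g' = restrict (inv_into (topspace Y) gh) (topspace Y)"
    have hm: "homeomorphic_map Y Y gh" using lg_homeo[OF gh] .
    have inj: "inj_on gh (topspace Y)" and sur: "gh ` topspace Y = topspace Y"
      using hm unfolding homeomorphic_eq_everything_map by auto
    have ghT: "\<forall>r\<in>A. \<forall>y\<in>topspace Y. gh (T r y) = T r (gh y)" using lg_comm[OF gh] .
    have gi: "gh ` topspace Y \<subseteq> topspace Y" using sur by simp
    have g'Y: "g' y \<in> topspace Y" if "y \<in> topspace Y" for y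
      using that sur unfolding g'_def by (metis inv_into_into restrict_apply')
    have ghg': "gh (g' y) = y" if "y \<in> topspace Y" for y
      using that sur unfolding g'_def by (metis f_inv_into_f restrict_apply')
    have g'gh: "g' (gh z) = z" if "z \<in> topspace Y" for z
      using that sur inj unfolding g'_def by (metis inv_into_f_f restrict_apply' imageI)
    have TY: "T r y \<in> topspace Y" if "r \<in> A" "y \<in> topspace Y" for r y
      using pb_homeo[OF pb] that by (meson homeomorphic_imp_continuous_map continuous_map_image_subset_topspace image_subset_iff)
    have g'i: "g' ` topspace Y \<subseteq> topspace Y" using g'Y by blast
    have g'T: "\<forall>r\<in>A. \<forall>y\<in>topspace Y. g' (T r y) = T r (g' y)"
    proof (intro ballI)
      fix r y assume r: "r \<in> A" and y: "y \<in> topspace Y"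
      have "gh (T r (g' y)) = T r y" using ghT r g'Y[OF y] ghg'[OF y] by simp
      then have "g' (T r y) = g' (gh (T r (g' y)))" by simp
      also have "\<dots> = T r (g' y)" using g'gh TY r g'Y y by blast
      finally show "g' (T r y) = T r (g' y)" .
    qed
    have "(\<lambda>x. \<bar>rot Y \<pi> \<theta> x g'\<bar>) ` topspace X = (\<lambda>x. \<bar>rot Y \<pi> \<theta> x gh\<bar>) ` topspace X"
    proof (intro equalityI subsetI)
      fix v assume "v \<in> (\<lambda>x. \<bar>rot Y \<pi> \<theta> x g'\<bar>) ` topspace X"
      then obtain x where x: "x \<in> topspace X" and v: "v = \<bar>rot Y \<pi> \<theta> x g'\<bar>" by blast
      obtain y where y: "y \<in> topspace Y" "\<pi> y = x" using fib[OF x] by blast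
      have 1: "rot Y \<pi> \<theta> x g' = \<theta> (g' y) - \<theta> y" using rot_eq[OF A pb sw g'i g'T y(1)] y by simp
      have 2: "rot Y \<pi> \<theta> (\<pi> (g' y)) gh = \<theta> y - \<theta> (g' y)"
        using rot_eq[OF A pb sw gi ghT g'Y[OF y(1)]] ghg'[OF y(1)] by simp
      have "v = \<bar>rot Y \<pi> \<theta> (\<pi> (g' y)) gh\<bar>" using 1 2 v by simp
      then show "v \<in> (\<lambda>x. \<bar>rot Y \<pi> \<theta> x gh\<bar>) ` topspace X" using piX[OF g'Y[OF y(1)]] by blast
    next
      fix v assume "v \<in> (\<lambda>x. \<bar>rot Y \<pi> \<theta> x gh\<bar>) ` topspace X"
      then obtain x where x: "x \<in> topspace X" and v: "v = \<bar>rot Y \<pi> \<theta> x gh\<bar>" by blast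
      obtain y where y: "y \<in> topspace Y" "\<pi> y = x" using fib[OF x] by blast
      have ghY: "gh y \<in> topspace Y" using gi y by blast
      have 1: "rot Y \<pi> \<theta> x gh = \<theta> (gh y) - \<theta> y" using rot_eq[OF A pb sw gi ghT y(1)] y by simp
      have 2: "rot Y \<pi> \<theta> (\<pi> (gh y)) g' = \<theta> y - \<theta> (gh y)"
        using rot_eq[OF A pb sw g'i g'T ghY] g'gh[OF y(1)] by simp
      have "v = \<bar>rot Y \<pi> \<theta> (\<pi> (gh y)) g'\<bar>" using 1 2 v by simp
      then show "v \<in> (\<lambda>x. \<bar>rot Y \<pi> \<theta> x g'\<bar>) ` topspace X" using piX[OF ghY] by blast
    qed
    then show ?thesis unfolding lift_norm_def g'_def[symmetric] by simp
  qed
  have P3: "lift_norm X Y \<pi> \<theta> (gh \<circ> hh) \<le> lift_norm X Y \<pi> \<theta> gh + lift_norm X Y \<pi> \<theta> hh"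
    if gh: "gh \<in> ?L" and hh: "hh \<in> ?L" for gh hh
  proof -
    have gi: "gh ` topspace Y \<subseteq> topspace Y" and hi: "hh ` topspace Y \<subseteq> topspace Y"
      using lg_homeo[OF gh] lg_homeo[OF hh] unfolding homeomorphic_eq_everything_map by auto
    have ghT: "\<forall>r\<in>A. \<forall>y\<in>topspace Y. gh (T r y) = T r (gh y)" using lg_comm[OF gh] .
    have hhT: "\<forall>r\<in>A. \<forall>y\<in>topspace Y. hh (T r y) = T r (hh y)" using lg_comm[OF hh] .
    have ci: "(gh \<circ> hh) ` topspace Y \<subseteq> topspace Y" using gi hi by auto
    have cT: "\<forall>r\<in>A. \<forall>y\<in>topspace Y. (gh \<circ> hh) (T r y) = T r ((gh \<circ> hh) y)"
      using ghT hhT hi by auto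
    show ?thesis unfolding lift_norm_def
    proof (rule cSUP_least)
      show "topspace X \<noteq> {}" using ne .
      fix x assume x: "x \<in> topspace X"
      obtain y where y: "y \<in> topspace Y" "\<pi> y = x" using fib[OF x] by blast
      have hY: "hh y \<in> topspace Y" using hi y by blast
      have 1: "rot Y \<pi> \<theta> x (gh \<circ> hh) = \<theta> (gh (hh y)) - \<theta> y" using rot_eq[OF A pb sw ci cT y(1)] y by (simp add: o_def)
      have 2: "rot Y \<pi> \<theta> (\<pi> (hh y)) gh = \<theta> (gh (hh y)) - \<theta> (hh y)" using rot_eq[OF A pb sw gi ghT hY] by simp
      have 3: "rot Y \<pi> \<theta> x hh = \<theta> (hh y) - \<theta> y" using rot_eq[OF A pb sw hi hhT y(1)] y by simp
      have a: "\<bar>rot Y \<pi> \<theta> (\<pi> (hh y)) gh\<bar> \<le> (SUP x\<in>topspace X. \<bar>rot Y \<pi> \<theta> x gh\<bar>)"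
        by (rule cSUP_upper[OF piX[OF hY]]) (rule bspec[OF P1 gh])
      have b: "\<bar>rot Y \<pi> \<theta> x hh\<bar> \<le> (SUP x\<in>topspace X. \<bar>rot Y \<pi> \<theta> x hh\<bar>)"
        by (rule cSUP_upper[OF x]) (rule bspec[OF P1 hh])
      show "\<bar>rot Y \<pi> \<theta> x (gh \<circ> hh)\<bar> \<le> (SUP x\<in>topspace X. \<bar>rot Y \<pi> \<theta> x gh\<bar>) + (SUP x\<in>topspace X. \<bar>rot Y \<pi> \<theta> x hh\<bar>)"
        using 1 2 3 a b by linarith
    qed
  qed
  show ?thesis using P1 P2 P3 by blast
qed

end
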